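(* Let $V$ be any finite set of points in $\mathbb{R}^m$ with $|V|\ge 2$, and let $T$ be any tree produced by the bisecting $k$-means algorithm on $V$. Then $T$ is a constant-factor approximation for the Hierarchical-Revenue objective: there is an absolute constant $\gamma>0$ (one may take $\gamma=\tfrac{1}{35}$), independent of $V$ and $m$, such that $rev_T(V)\ \ge\ \gamma\cdot \max_{T'} rev_{T'}(V)$, where the maximum is over all hierarchical clustering trees $T'$ on $V$.
   Context: Distances are Euclidean: $d(x,y)=\|x-y\|_2$. For a finite nonempty $S\subset\mathbb{R}^m$, $\rho(S)=\frac{1}{|S|}\sum_{u\in S}u$ is its centroid and $\Delta_1(S)=\sum_{u\in S}d(u,\rho(S))^2$. A partition $(S_1,S_2)$ of a finite set $S$ ($|S|\ge2$) into two nonempty sets is an optimal 2-means partition if it minimizes $\Delta_1(S_1)+\Delta_1(S_2)$ over all such partitions. A hierarchical clustering tree $T$ on $V$ is a rooted binary tree (each internal node has exactly two children) whose leaves are in bijection with $V$; each node is identified with the set of points at the leaves of its subtree. If an internal node has set $S$ and its children have sets $S_1,S_2$, we call this a split and write $S\to(S_1,S_2)\in T$. The bisecting $k$-means algorithm builds $T$ top-down: starting from the root set $V$, every set $S$ with $|S|\ge 2$ is split into an optimal 2-means partition $(S_1,S_2)$ of $S$, recursively, until all sets are singletons. Revenue: for a split $S\to(S_1,S_2)$ and $i\in S_1$, $j\in S_2$, let $\delta_{S_1,S_2}(i,j)=\max\{d(i,\rho(S_1)),d(j,\rho(S_2))\}$ and $rev(i,j)=\min\{d(i,j)/\delta_{S_1,S_2}(i,j),\,1\}$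 (with $rev(i,j)=1$ if $\delta_{S_1,S_2}(i,j)=0$). Let $rev(S_1,S_2)=\sum_{i\in S_1}\sum_{j\in S_2}rev(i,j)$. The Hierarchical-Revenue of $T$ is $rev_T(V)=\sum_{S\to(S_1,S_2)\in T}rev(S_1,S_2)$, i.e. the sum over all unordered pairs $\{i,j\}\subseteq V$ of $rev(i,j)$ computed at the split where $i$ and $j$ are first separated. *)

theory Defs
  imports "HOL-Analysis.Analysis"
begin

definition centroid :: "'a::euclidean_space set \<Rightarrow> 'a" where
  "centroid S = (1 / real (card S)) *\<^sub>R (\<Sum>u\<in>S. u)"

definition cost1 :: "'a::euclidean_space set \<Rightarrow> real" where
  "cost1 S = (\<Sum>u\<in>S. (dist u (centroid S))\<^sup>2)"

definition opt_2means :: "'a::euclidean_space set \<Rightarrow> 'a set \<Rightarrow> 'a set \<Rightarrow> bool" where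
  "opt_2means S S1 S2 \<longleftrightarrow>
     S1 \<noteq> {} \<and> S2 \<noteq> {} \<and> S1 \<inter> S2 = {} \<and> S1 \<union> S2 = S \<and>
     (\<forall>A B. A \<noteq> {} \<and> B \<noteq> {} \<and> A \<inter> B = {} \<and> A \<union> B = S \<longrightarrow>
        cost1 S1 + cost1 S2 \<le> cost1 A + cost1 B)"

datatype 'a htree = Leaf 'a | Node "'a htree" "'a htree"

fun leaves :: "'a htree \<Rightarrow> 'a list" where
  "leaves (Leaf x) = [x]"
| "leaves (Node l r) = leaves l @ leaves r"

definition lset :: "'a htree \<Rightarrow> 'a set" where
  "lset t = set (leaves t)"

definition hc_tree :: "'a set \<Rightarrow> 'a htree \<Rightarrow> bool" where
  "hc_tree V T \<longleftrightarrow> distinct (leaves T) \<and> set (leaves T) = V"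

fun all_splits_opt :: "'a::euclidean_space htree \<Rightarrow> bool" where
  "all_splits_opt (Leaf x) = True"
| "all_splits_opt (Node l r) =
     (opt_2means (lset (Node l r)) (lset l) (lset r) \<and> all_splits_opt l \<and> all_splits_opt r)"

definition bisecting_kmeans_tree :: "'a::euclidean_space set \<Rightarrow> 'a htree \<Rightarrow> bool" where
  "bisecting_kmeans_tree V T \<longleftrightarrow> hc_tree V T \<and> all_splits_opt T"

definition rev_pair :: "'a::euclidean_space set \<Rightarrow> 'a set \<Rightarrow> 'a \<Rightarrow> 'a \<Rightarrow> real" where
  "rev_pair S1 S2 i j =
     (let \<delta> = max (dist i (centroid S1)) (dist j (centroid S2))
      in if \<delta> = 0 then 1 else min (dist i j / \<delta>) 1)"

definition rev_split :: "'a::euclidean_space set \<Rightarrow> 'a set \<Rightarrow> real" where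
  "rev_split S1 S2 = (\<Sum>i\<in>S1. \<Sum>j\<in>S2. rev_pair S1 S2 i j)"

fun rev_tree :: "'a::euclidean_space htree \<Rightarrow> real" where
  "rev_tree (Leaf x) = 0"
| "rev_tree (Node l r) = rev_split (lset l) (lset r) + rev_tree l + rev_tree r"

end

theory Submission
  imports Defs
begin

lemma centroid_scale:
  assumes "finite A" "A \<noteq> {}"
  shows "real (card A) *\<^sub>R centroid A = (\<Sum>x\<in>A. x)"
  using assms by (simp add: centroid_def)

lemma sq_dist_expand:
  fixes x c z :: "'a::euclidean_space"
  shows "(dist x z)\<^sup>2 = (dist x c)\<^sup>2 + 2 * inner (x - c) (c - z) + (dist c z)\<^sup>2"
proof -
  show ?thesis by (simp add: dist_norm power2_norm_eq_inner inner_diff_left inner_diff_right inner_commute algebra_simps)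
qed

lemma parallel_axis:
  fixes A :: "'a::euclidean_space set"
  assumes "finite A" "A \<noteq> {}"
  shows "(\<Sum>x\<in>A. (dist x z)\<^sup>2) = cost1 A + real (card A) * (dist (centroid A) z)\<^sup>2"
proof -
  let ?c = "centroid A"
  have "(\<Sum>x\<in>A. (dist x z)\<^sup>2) = (\<Sum>x\<in>A. (dist x ?c)\<^sup>2 + 2 * inner (x - ?c) (?c - z) + (dist ?c z)\<^sup>2)"
    by (rule sum.cong) (auto intro: sq_dist_expand)
  also have "\<dots> = cost1 A + 2 * inner (\<Sum>x\<in>A. x - ?c) (?c - z) + real (card A) * (dist ?c z)\<^sup>2"
    by (simp add: sum.distrib cost1_def inner_sum_left sum_distrib_left)
  also have "(\<Sum>x\<in>A. x - ?c) = 0"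
    using centroid_scale[OF assms] by (simp add: sum_subtractf sum_constant_scaleR)
  finally show ?thesis by simp
qed


lemma q2aux: fixes n1 k e :: real assumes "n1 + k > 0"
  shows "n1 * (k * e / (n1 + k))\<^sup>2 + k * (n1 * e / (n1 + k))\<^sup>2 = n1 * k * e\<^sup>2 / (n1 + k)"
proof -
  have "n1 * (k * e / (n1 + k))\<^sup>2 + k * (n1 * e / (n1 + k))\<^sup>2 = (n1 * k * e\<^sup>2) * (n1 + k) / (n1 + k)^2"
    by (simp add: power_divide power_mult_distrib add_divide_distrib algebra_simps power2_eq_square)
  also have "\<dots> = n1 * k * e\<^sup>2 / (n1 + k)" using assms by (simp add: power2_eq_square)
  finally show ?thesis .
qed

lemma opt_sym: "opt_2means S S1 S2 \<Longrightarrow> opt_2means S S2 S1"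
  unfolding opt_2means_def by (metis Int_commute Un_commute add.commute)

lemma move_lemma:
  fixes S :: "'a::euclidean_space set"
  assumes fin: "finite S" and opt: "opt_2means S S1 S2"
    and X: "X \<subseteq> S2" "X \<noteq> {}" "X \<noteq> S2"
  shows "real (card S2) * (real (card S1) + real (card X)) * (dist (centroid X) (centroid S2))\<^sup>2
        \<le> real (card S1) * (real (card S2) - real (card X)) * (dist (centroid S1) (centroid X))\<^sup>2"
proof -
  have S1ne: "S1 \<noteq> {}" and S2ne: "S2 \<noteq> {}" and disj: "S1 \<inter> S2 = {}" and un: "S1 \<union> S2 = S"
    and optc: "\<And>A B. A \<noteq> {} \<Longrightarrow> B \<noteq> {} \<Longrightarrow> A \<inter> B = {} \<Longrightarrow> A \<union> B = S \<Longrightarrow>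
        cost1 S1 + cost1 S2 \<le> cost1 A + cost1 B"
    using opt unfolding opt_2means_def by blast+
  have f1: "finite S1" and f2: "finite S2" using fin un by auto
  have fX: "finite X" using f2 X(1) finite_subset by blast
  define Y where "Y = S2 - X"
  have fY: "finite Y" using f2 Y_def by simp
  have Yne: "Y \<noteq> {}" using X Y_def by blast
  have cY: "card Y = card S2 - card X" using Y_def X(1) fX by (simp add: card_Diff_subset)
  have kpos: "card X > 0" using fX X(2) by (simp add: card_gt_0_iff)
  have klt: "card X < card S2" using X f2 by (meson psubsetI psubset_card_mono)
  have n1pos: "card S1 > 0" using f1 S1ne by (simp add: card_gt_0_iff)
  define n1 where "n1 = real (card S1)"
  define n2 where "n2 = real (card S2)"
  define k where "k = real (card X)"
  define m where "m = real (card Y)"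
  have m_eq: "m = n2 - k" using cY klt unfolding m_def n2_def k_def by simp
  have kp: "k > 0" using kpos k_def by simp
  have mp: "m > 0" using m_eq klt n2_def k_def by simp
  have n1p: "n1 > 0" using n1pos n1_def by simp
  define c1 where "c1 = centroid S1"
  define c2 where "c2 = centroid S2"
  define y where "y = centroid X"
  define cy where "cy = centroid Y"
  define z where "z = (1 / (n1 + k)) *\<^sub>R (n1 *\<^sub>R c1 + k *\<^sub>R y)"
  have oi: "cost1 S1 + cost1 S2 \<le> cost1 (S1 \<union> X) + cost1 Y"
    apply (rule optc)
    using S1ne Yne disj X(1) un by (auto simp: Y_def)
  have dSX: "S1 \<inter> X = {}" using disj X(1) by blast
  have "cost1 (S1 \<union> X) \<le> (\<Sum>x\<in>S1 \<union> X. (dist x z)\<^sup>2)"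
    using parallel_axis[of "S1 \<union> X" z] f1 fX S1ne by simp
  also have "\<dots> = (\<Sum>x\<in>S1. (dist x z)\<^sup>2) + (\<Sum>x\<in>X. (dist x z)\<^sup>2)"
    using f1 fX dSX by (simp add: sum.union_disjoint)
  also have "\<dots> = cost1 S1 + n1 * (dist c1 z)\<^sup>2 + cost1 X + k * (dist y z)\<^sup>2"
    using parallel_axis[of S1 z] parallel_axis[of X z] f1 fX S1ne X(2)
    unfolding n1_def k_def c1_def y_def by simp
  finally have A1: "cost1 (S1 \<union> X) \<le> cost1 S1 + n1 * (dist c1 z)\<^sup>2 + cost1 X + k * (dist y z)\<^sup>2" .
  have "cost1 S2 = (\<Sum>x\<in>S2. (dist x c2)\<^sup>2)" unfolding cost1_def c2_def ..
  also have "\<dots> = (\<Sum>x\<in>Y. (dist x c2)\<^sup>2) + (\<Sum>x\<in>X. (dist x c2)\<^sup>2)"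
    using sum.subset_diff[OF X(1) f2] Y_def by simp
  also have "\<dots> = cost1 Y + m * (dist cy c2)\<^sup>2 + cost1 X + k * (dist y c2)\<^sup>2"
    using parallel_axis[of Y c2] parallel_axis[of X c2] fY fX Yne X(2)
    unfolding m_def k_def cy_def y_def by simp
  finally have A2: "cost1 S2 = cost1 Y + m * (dist cy c2)\<^sup>2 + cost1 X + k * (dist y c2)\<^sup>2" .
  have star: "m * (dist cy c2)\<^sup>2 + k * (dist y c2)\<^sup>2 \<le> n1 * (dist c1 z)\<^sup>2 + k * (dist y z)\<^sup>2"
    using oi A1 A2 by linarith
  have sY: "m *\<^sub>R cy = n2 *\<^sub>R c2 - k *\<^sub>R y"
  proof -
    have "m *\<^sub>R cy = (\<Sum>x\<in>Y. x)" using centroid_scale[OF fY Yne] m_def cy_def by simp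
    also have "\<dots> = (\<Sum>x\<in>S2. x) - (\<Sum>x\<in>X. x)"
      using sum.subset_diff[OF X(1) f2, of "\<lambda>x. x"] Y_def by simp
    also have "\<dots> = n2 *\<^sub>R c2 - k *\<^sub>R y"
      using centroid_scale[OF f2 S2ne] centroid_scale[OF fX X(2)] n2_def k_def c2_def y_def by simp
    finally show ?thesis .
  qed
  have n2eq: "n2 = k + m" using m_eq by simp
  have sY2: "m *\<^sub>R cy = (k + m) *\<^sub>R c2 - k *\<^sub>R y" using sY n2eq by simp
  have "m *\<^sub>R (cy - c2) = k *\<^sub>R (c2 - y)"
    using sY2 by (simp add: algebra_simps scaleR_add_left)
  then have e1: "m * dist cy c2 = k * dist c2 y"
    using mp kp by (metis abs_of_pos dist_norm norm_scaleR)
  have zz: "(n1 + k) *\<^sub>R z = n1 *\<^sub>R c1 + k *\<^sub>R y" using n1p kp z_def by simp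
  have "(n1 + k) *\<^sub>R (c1 - z) = k *\<^sub>R (c1 - y)" using zz by (simp add: algebra_simps)
  then have e2: "(n1 + k) * dist c1 z = k * dist c1 y"
    using n1p kp by (metis abs_of_pos add_pos_pos dist_norm norm_scaleR)
  have "(n1 + k) *\<^sub>R (y - z) = n1 *\<^sub>R (y - c1)" using zz by (simp add: algebra_simps)
  then have e3: "(n1 + k) * dist y z = n1 * dist c1 y"
    using n1p kp by (metis abs_of_pos add_pos_pos dist_norm norm_scaleR dist_commute)
  define Q where "Q = (dist y c2)\<^sup>2"
  define R where "R = (dist c1 y)\<^sup>2"
  have d1: "dist cy c2 = k * dist y c2 / m" using e1 mp by (simp add: field_simps dist_commute)
  have q1: "m * (dist cy c2)\<^sup>2 = k^2 * Q / m"
    unfolding d1 Q_def using mp by (simp add: field_simps power2_eq_square)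
  have d2: "dist c1 z = k * dist c1 y / (n1 + k)" using e2 n1p kp by (simp add: field_simps)
  have d3: "dist y z = n1 * dist c1 y / (n1 + k)" using e3 n1p kp by (simp add: field_simps)
  have q2: "n1 * (dist c1 z)\<^sup>2 + k * (dist y z)\<^sup>2 = n1 * k * R / (n1 + k)"
    unfolding d2 d3 R_def using n1p kp q2aux[of n1 k "dist c1 y"] by simp
  have "k^2 * Q / m + k * Q \<le> n1 * k * R / (n1 + k)" using star q1 q2 Q_def by simp
  moreover have "k^2 * Q / m + k * Q = k * (Q * (k + m) / m)" using mp by (simp add: field_simps power2_eq_square)
  moreover have "n1 * k * R / (n1 + k) = k * (n1 * R / (n1 + k))" by simp
  ultimately have "k * (Q * (k + m) / m) \<le> k * (n1 * R / (n1 + k))" by simp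
  then have h: "Q * (k + m) / m \<le> n1 * R / (n1 + k)" using kp mult_le_cancel_left_pos by blast
  have "Q * (k + m) / m * (m * (n1 + k)) \<le> n1 * R / (n1 + k) * (m * (n1 + k))"
    using h mp n1p kp by (intro mult_right_mono) auto
  moreover have "Q * (k + m) / m * (m * (n1 + k)) = Q * (k + m) * (n1 + k)" using mp by simp
  moreover have "n1 * R / (n1 + k) * (m * (n1 + k)) = n1 * m * R" using n1p kp by simp
  ultimately have "Q * (k + m) * (n1 + k) \<le> n1 * m * R" by simp
  then show ?thesis unfolding Q_def R_def using m_eq n1_def n2_def k_def y_def c1_def c2_def
    by (simp add: algebra_simps)
qed


lemma voronoi:
  fixes S :: "'a::euclidean_space set"
  assumes fin: "finite S" and opt: "opt_2means S S1 S2" and j: "j \<in> S2"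
  shows "dist j (centroid S2) \<le> dist j (centroid S1)"
proof (cases "S2 = {j}")
  case True
  then show ?thesis by (simp add: centroid_def)
next
  case False
  have un: "S1 \<union> S2 = S" and S1ne: "S1 \<noteq> {}" using opt unfolding opt_2means_def by auto
  have f1: "finite S1" and f2: "finite S2" using fin un by auto
  have n1: "card S1 > 0" using f1 S1ne by (simp add: card_gt_0_iff)
  have n2: "card S2 \<ge> 1" using f2 j by (metis One_nat_def Suc_leI card_gt_0_iff empty_iff)
  have cj: "centroid {j} = j" by (simp add: centroid_def)
  have mv: "real (card S2) * (real (card S1) + 1) * (dist j (centroid S2))\<^sup>2
        \<le> real (card S1) * (real (card S2) - 1) * (dist (centroid S1) j)\<^sup>2"
    using move_lemma[OF fin opt, of "{j}"] j False cj by simp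
  have le: "real (card S1) * (real (card S2) - 1) \<le> real (card S2) * (real (card S1) + 1)"
    by (simp add: algebra_simps)
  have pos: "real (card S2) * (real (card S1) + 1) > 0" using n2 by simp
  have "real (card S2) * (real (card S1) + 1) * (dist j (centroid S2))\<^sup>2
        \<le> real (card S2) * (real (card S1) + 1) * (dist (centroid S1) j)\<^sup>2"
    using mv le mult_right_mono[OF le, of "(dist (centroid S1) j)\<^sup>2"] by simp
  then have "(dist j (centroid S2))\<^sup>2 \<le> (dist j (centroid S1))\<^sup>2"
    using pos mult_le_cancel_left_pos by (metis dist_commute)
  then show ?thesis using power2_le_imp_le zero_le_dist by blast
qed

lemma centroid_in_cball:
  fixes X :: "'a::euclidean_space set"
  assumes "finite X" "X \<noteq> {}" "\<And>j. j \<in> X \<Longrightarrow> dist i j \<le> r"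
  shows "dist i (centroid X) \<le> r"
proof -
  have cX: "centroid X = (\<Sum>j\<in>X. (1 / real (card X)) *\<^sub>R j)"
    by (simp add: centroid_def scaleR_sum_right)
  have "(\<Sum>j\<in>X. (1 / real (card X)) *\<^sub>R j) \<in> cball i r"
    apply (rule convex_sum)
    using assms by (auto simp: card_gt_0_iff)
  then show ?thesis using cX by simp
qed

lemma L_identity:
  fixes c1 c2 y i :: "'a::euclidean_space"
  shows "(dist c1 y)\<^sup>2 - (dist c2 y)\<^sup>2 = ((dist c1 i)\<^sup>2 - (dist c2 i)\<^sup>2) + 2 * inner (c2 - c1) (y - i)"
  by (simp add: dist_norm power2_norm_eq_inner inner_diff_left inner_diff_right inner_commute algebra_simps)

lemma bad_bound:
  fixes S :: "'a::euclidean_space set"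
  assumes fin: "finite S" and opt: "opt_2means S S1 S2" and i: "i \<in> S1"
  shows "real (card {j\<in>S2. dist i j < dist i (centroid S1) / 10 \<and> dist j (centroid S2) \<le> dist i (centroid S1)})
           * (real (card S1) + real (card S2)) * 81 \<le> 42 * real (card S1) * real (card S2)"
proof -
  define c1 where "c1 = centroid S1"
  define c2 where "c2 = centroid S2"
  define a where "a = dist i c1"
  define X where "X = {j\<in>S2. dist i j < a / 10 \<and> dist j c2 \<le> a}"
  have un: "S1 \<union> S2 = S" using opt unfolding opt_2means_def by auto
  have f1: "finite S1" and f2: "finite S2" using fin un by auto
  have fX: "finite X" using f2 X_def by simp
  have eqX: "{j\<in>S2. dist i j < dist i (centroid S1) / 10 \<and> dist j (centroid S2) \<le> dist i (centroid S1)} = X"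
    unfolding X_def a_def c1_def c2_def by (rule refl)
  show ?thesis
  proof (cases "X = {}")
    case True
    then show ?thesis unfolding eqX by simp
  next
    case False
    then obtain j0 where j0: "j0 \<in> X" by blast
    have j0a: "dist i j0 < a / 10" "dist j0 c2 \<le> a" "j0 \<in> S2" using j0 X_def by auto
    have apos: "a > 0" using j0a(1) zero_le_dist[of i j0] by linarith
    define y where "y = centroid X"
    have hy: "dist i y \<le> a / 10"
      unfolding y_def by (rule centroid_in_cball[OF fX False]) (auto simp: X_def)
    have vor_i: "a \<le> dist i c2"
      using voronoi[OF fin opt_sym[OF opt] i] unfolding a_def c1_def c2_def by simp
    have XS2: "X \<subseteq> S2" using X_def by auto
    have XneS2: "X \<noteq> S2"
    proof
      assume "X = S2"
      then have "y = c2" using y_def c2_def by simp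
      then show False using hy vor_i apos by simp
    qed
    define n1 where "n1 = real (card S1)"
    define n2 where "n2 = real (card S2)"
    define k where "k = real (card X)"
    have kpos: "k > 0" using fX False k_def by (simp add: card_gt_0_iff)
    have klt: "k < n2" using XS2 XneS2 f2 unfolding k_def n2_def by (meson of_nat_less_iff psubsetI psubset_card_mono)
    have n1pos: "n1 > 0" using opt f1 unfolding opt_2means_def n1_def by (simp add: card_gt_0_iff)
    define Q where "Q = (dist y c2)\<^sup>2"
    define L where "L = (dist c1 y)\<^sup>2 - (dist c2 y)\<^sup>2"
    have mv: "n2 * (n1 + k) * Q \<le> n1 * (n2 - k) * (Q + L)"
      using move_lemma[OF fin opt XS2 False XneS2]
      unfolding Q_def L_def n1_def n2_def k_def y_def c1_def c2_def by (simp add: dist_commute)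
    have eq: "n1 * (n2 - k) * (Q + L) - n2 * (n1 + k) * Q = n1 * (n2 - k) * L - k * (n1 + n2) * Q"
      by (simp add: algebra_simps)
    have m1: "k * (n1 + n2) * Q \<le> n1 * (n2 - k) * L" using mv eq by linarith
    have Qnn: "Q \<ge> 0" unfolding Q_def by simp
    have p1: "n1 * (n2 - k) > 0" using n1pos klt by simp
    have Lnn: "L \<ge> 0"
    proof (rule ccontr)
      assume "\<not> L \<ge> 0"
      then have "n1 * (n2 - k) * L < 0" using p1 by (simp add: mult_pos_neg)
      moreover have "k * (n1 + n2) * Q \<ge> 0" using kpos n1pos klt Qnn by simp
      ultimately show False using m1 by linarith
    qed
    have m2: "n1 * (n2 - k) * L \<le> n1 * n2 * L"
      using Lnn n1pos kpos by (intro mult_right_mono) (auto simp: algebra_simps)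
    define D where "D = dist c1 c2"
    have Dle: "D \<le> a + a / 10 + a"
    proof -
      have "D \<le> dist c1 i + dist i j0 + dist j0 c2" unfolding D_def
        by (metis add_mono dist_triangle order_trans order_refl)
      then show ?thesis using j0a a_def by (simp add: dist_commute)
    qed
    have "L = ((dist c1 i)\<^sup>2 - (dist c2 i)\<^sup>2) + 2 * inner (c2 - c1) (y - i)"
      unfolding L_def by (rule L_identity)
    also have "\<dots> \<le> 0 + 2 * (D * (a / 10))"
    proof (rule add_mono)
      show "(dist c1 i)\<^sup>2 - (dist c2 i)\<^sup>2 \<le> 0"
        using vor_i a_def apos by (simp add: dist_commute power_mono)
      have "inner (c2 - c1) (y - i) \<le> norm (c2 - c1) * norm (y - i)" by (rule norm_cauchy_schwarz)
      also have "\<dots> \<le> D * (a / 10)"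
        using hy unfolding D_def by (intro mult_mono) (auto simp: dist_norm norm_minus_commute)
      finally show "2 * inner (c2 - c1) (y - i) \<le> 2 * (D * (a / 10))" by simp
    qed
    finally have Lle: "L \<le> 2 * (D * (a / 10))" by simp
    have "L \<le> 2 * ((a + a / 10 + a) * (a / 10))"
    proof -
      have "D * (a / 10) \<le> (a + a / 10 + a) * (a / 10)" using Dle apos by (intro mult_right_mono) auto
      then show ?thesis using Lle by linarith
    qed
    then have Lle2: "L \<le> 42 / 100 * a\<^sup>2" by (simp add: power2_eq_square algebra_simps)
    have "dist i c2 \<le> dist i y + dist y c2" by (rule dist_triangle)
    then have "dist y c2 \<ge> a - a / 10" using hy vor_i by linarith
    then have "dist y c2 \<ge> 9 / 10 * a" by simp
    then have "(9 / 10 * a)\<^sup>2 \<le> Q" unfolding Q_def using apos by (intro power_mono) auto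
    then have Qge: "Q \<ge> 81 / 100 * a\<^sup>2" by (simp add: power_mult_distrib power2_eq_square)
    have kn: "k * (n1 + n2) \<ge> 0" using kpos n1pos klt by simp
    have "k * (n1 + n2) * (81 / 100 * a\<^sup>2) \<le> k * (n1 + n2) * Q"
      using Qge kn by (rule mult_left_mono)
    also have "\<dots> \<le> n1 * n2 * L" using m1 m2 by linarith
    also have "\<dots> \<le> n1 * n2 * (42 / 100 * a\<^sup>2)"
      using Lle2 n1pos klt kpos by (intro mult_left_mono) auto
    finally have "(k * (n1 + n2) * 81) * (a\<^sup>2 / 100) \<le> (42 * n1 * n2) * (a\<^sup>2 / 100)"
      by (simp add: algebra_simps)
    then have "k * (n1 + n2) * 81 \<le> 42 * n1 * n2" using apos by simp
    then show ?thesis unfolding k_def n1_def n2_def eqX .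
  qed
qed


lemma sum_ind:
  assumes "finite A" "B \<subseteq> A"
  shows "(\<Sum>x\<in>A. (if x \<in> B then c else 0)) = real (card B) * (c::real)"
proof -
  have "(\<Sum>x\<in>A. (if x \<in> B then c else 0)) = (\<Sum>x\<in>A \<inter> {x. x \<in> B}. c) + (\<Sum>x\<in>A \<inter> - {x. x \<in> B}. 0)"
    using sum.If_cases[OF assms(1), of "\<lambda>x. x \<in> B" "\<lambda>_. c" "\<lambda>_. 0"] by simp
  also have "A \<inter> {x. x \<in> B} = B" using assms(2) by blast
  finally show ?thesis by simp
qed

lemma rev_pair_nonneg: "rev_pair S1 S2 i j \<ge> 0"
  unfolding rev_pair_def Let_def by (auto simp: zero_le_divide_iff le_max_iff_disj)

lemma rev_pair_le1: "rev_pair S1 S2 i j \<le> 1"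
  unfolding rev_pair_def Let_def by auto

lemma rev_pair_good:
  assumes "\<not> (dist i j < dist i (centroid S1) / 10 \<and> dist j (centroid S2) \<le> dist i (centroid S1))"
    and "\<not> (dist j i < dist j (centroid S2) / 10 \<and> dist i (centroid S1) \<le> dist j (centroid S2))"
  shows "rev_pair S1 S2 i j \<ge> 1 / 10"
proof -
  define a where "a = dist i (centroid S1)"
  define b where "b = dist j (centroid S2)"
  define d where "d = max a b"
  have dpos: "d \<ge> 0" unfolding d_def a_def b_def by (simp add: le_max_iff_disj)
  have dd: "dist i j \<ge> d / 10"
    using assms unfolding d_def a_def b_def by (auto simp: dist_commute max_def)
  show ?thesis
  proof (cases "d = 0")
    case True
    then show ?thesis unfolding rev_pair_def Let_def d_def a_def b_def by simp
  next
    case False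
    then have "d > 0" using dpos by simp
    then have "dist i j / d \<ge> 1 / 10" using dd by (simp add: field_simps)
    then show ?thesis using False unfolding rev_pair_def Let_def d_def a_def b_def by simp
  qed
qed

lemma split_bound:
  fixes S :: "'a::euclidean_space set"
  assumes fin: "finite S" and opt: "opt_2means S S1 S2"
  shows "rev_split S1 S2 \<ge> real (card S1 * card S2) / 35"
proof -
  have un: "S1 \<union> S2 = S" using opt unfolding opt_2means_def by auto
  have f1: "finite S1" and f2: "finite S2" using fin un by auto
  define X where "X i = {j\<in>S2. dist i j < dist i (centroid S1) / 10 \<and> dist j (centroid S2) \<le> dist i (centroid S1)}" for i
  define Z where "Z j = {i\<in>S1. dist j i < dist j (centroid S2) / 10 \<and> dist i (centroid S1) \<le> dist j (centroid S2)}" for j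
  define n1 where "n1 = real (card S1)"
  define n2 where "n2 = real (card S2)"
  have XS: "X i \<subseteq> S2" for i unfolding X_def by auto
  have ZS: "Z j \<subseteq> S1" for j unfolding Z_def by auto
  have pw: "rev_pair S1 S2 i j \<ge> 1/10 - (if j \<in> X i then 1/10 else 0) - (if i \<in> Z j then 1/10 else 0)"
    if "i \<in> S1" "j \<in> S2" for i j
  proof (cases "j \<in> X i \<or> i \<in> Z j")
    case True
    then show ?thesis using rev_pair_nonneg[of S1 S2 i j] by auto
  next
    case False
    then show ?thesis using rev_pair_good[of i j S1 S2] that unfolding X_def Z_def by auto
  qed
  have "rev_split S1 S2 \<ge> (\<Sum>i\<in>S1. \<Sum>j\<in>S2. 1/10 - (if j \<in> X i then 1/10 else 0) - (if i \<in> Z j then 1/10 else 0))"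
    unfolding rev_split_def using pw by (intro sum_mono) auto
  also have "(\<Sum>i\<in>S1. \<Sum>j\<in>S2. 1/10 - (if j \<in> X i then 1/10 else 0) - (if i \<in> Z j then 1/10 else 0))
     = (\<Sum>i\<in>S1. \<Sum>j\<in>S2. (1/10::real)) - (\<Sum>i\<in>S1. \<Sum>j\<in>S2. (if j \<in> X i then 1/10 else 0))
        - (\<Sum>i\<in>S1. \<Sum>j\<in>S2. (if i \<in> Z j then 1/10 else 0))"
    by (simp add: sum_subtractf)
  also have "(\<Sum>i\<in>S1. \<Sum>j\<in>S2. (if i \<in> Z j then 1/10 else 0)) = (\<Sum>j\<in>S2. \<Sum>i\<in>S1. (if i \<in> Z j then (1/10::real) else 0))"
    by (rule sum.swap)
  also have "\<dots> = (\<Sum>j\<in>S2. real (card (Z j)) * (1/10))"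
    using sum_ind[OF f1 ZS] by simp
  also have "(\<Sum>i\<in>S1. \<Sum>j\<in>S2. (if j \<in> X i then 1/10 else 0)) = (\<Sum>i\<in>S1. real (card (X i)) * (1/10::real))"
    using sum_ind[OF f2 XS] by simp
  finally have r1: "rev_split S1 S2 \<ge> n1 * n2 / 10 - (\<Sum>i\<in>S1. real (card (X i))) / 10 - (\<Sum>j\<in>S2. real (card (Z j))) / 10"
    unfolding n1_def n2_def by (simp add: sum_divide_distrib[symmetric])
  have bX: "real (card (X i)) * (n1 + n2) * 81 \<le> 42 * n1 * n2" if "i \<in> S1" for i
    using bad_bound[OF fin opt that] unfolding X_def n1_def n2_def .
  have bZ: "real (card (Z j)) * (n1 + n2) * 81 \<le> 42 * n1 * n2" if "j \<in> S2" for j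
    using bad_bound[OF fin opt_sym[OF opt] that] unfolding Z_def n1_def n2_def by (simp add: algebra_simps)
  have sX: "(\<Sum>i\<in>S1. real (card (X i))) * (n1 + n2) * 81 \<le> n1 * (42 * n1 * n2)"
  proof -
    have "(\<Sum>i\<in>S1. real (card (X i))) * (n1 + n2) * 81 = (\<Sum>i\<in>S1. real (card (X i)) * (n1 + n2) * 81)"
      by (simp add: sum_distrib_right)
    also have "\<dots> \<le> (\<Sum>i\<in>S1. 42 * n1 * n2)" using bX by (intro sum_mono) auto
    finally show ?thesis unfolding n1_def by simp
  qed
  have sZ: "(\<Sum>j\<in>S2. real (card (Z j))) * (n1 + n2) * 81 \<le> n2 * (42 * n1 * n2)"
  proof -
    have "(\<Sum>j\<in>S2. real (card (Z j))) * (n1 + n2) * 81 = (\<Sum>j\<in>S2. real (card (Z j)) * (n1 + n2) * 81)"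
      by (simp add: sum_distrib_right)
    also have "\<dots> \<le> (\<Sum>j\<in>S2. 42 * n1 * n2)" using bZ by (intro sum_mono) auto
    finally show ?thesis unfolding n2_def by simp
  qed
  define sx where "sx = (\<Sum>i\<in>S1. real (card (X i)))"
  define sz where "sz = (\<Sum>j\<in>S2. real (card (Z j)))"
  have npos: "n1 + n2 > 0" using opt f1 unfolding opt_2means_def n1_def n2_def by (simp add: card_gt_0_iff add_pos_nonneg)
  have "(sx + sz) * (n1 + n2) * 81 \<le> (42 * n1 * n2) * (n1 + n2)"
    using sX sZ unfolding sx_def sz_def by (simp add: algebra_simps)
  then have "((sx + sz) * 81) * (n1 + n2) \<le> (42 * n1 * n2) * (n1 + n2)" by (simp add: algebra_simps)
  then have s: "(sx + sz) * 81 \<le> 42 * n1 * n2" using npos by simp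
  have "real (card S1 * card S2) / 35 \<le> n1 * n2 / 10 - sx / 10 - sz / 10"
  proof -
    define P where "P = n1 * n2"
    have P0: "P \<ge> 0" unfolding P_def n1_def n2_def by simp
    have e: "real (card S1 * card S2) = P" unfolding P_def n1_def n2_def by simp
    have "(sx + sz) * 81 \<le> 42 * P" using s unfolding P_def by simp
    then have "81 * sx + 81 * sz \<le> 42 * P" by (simp add: algebra_simps)
    then show ?thesis unfolding e P_def[symmetric] using P0 by linarith
  qed
  then show ?thesis using r1 unfolding sx_def sz_def by linarith
qed


fun np :: "'a htree \<Rightarrow> nat" where
  "np (Leaf x) = 0"
| "np (Node l r) = card (lset l) * card (lset r) + np l + np r"

lemma lset_Node: "lset (Node l r) = lset l \<union> lset r"
  by (simp add: lset_def)

lemma lset_finite: "finite (lset t)"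
  by (simp add: lset_def)

lemma np_formula: "distinct (leaves t) \<Longrightarrow> 2 * np t + card (lset t) = card (lset t) * card (lset t)"
proof (induction t)
  case (Leaf x)
  then show ?case by (simp add: lset_def)
next
  case (Node l r)
  have dl: "distinct (leaves l)" and dr: "distinct (leaves r)" and dis: "lset l \<inter> lset r = {}"
    using Node.prems by (auto simp: lset_def)
  have c: "card (lset (Node l r)) = card (lset l) + card (lset r)"
    using dis by (simp add: lset_Node lset_finite card_Un_disjoint)
  show ?case using Node.IH(1)[OF dl] Node.IH(2)[OF dr] unfolding c
    by (simp add: algebra_simps)
qed

lemma rev_split_le: "rev_split S1 S2 \<le> real (card S1 * card S2)"
proof -
  have "rev_split S1 S2 \<le> (\<Sum>i\<in>S1. real (card S2) * 1)"
    unfolding rev_split_def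
    by (intro sum_mono sum_bounded_above) (rule rev_pair_le1)
  also have "\<dots> \<le> real (card S1) * (real (card S2) * 1)"
    by (rule sum_bounded_above) simp
  finally show ?thesis by simp
qed

lemma rev_upper: "rev_tree t \<le> real (np t)"
proof (induction t)
  case (Leaf x)
  then show ?case by simp
next
  case (Node l r)
  then show ?case using rev_split_le[of "lset l" "lset r"] by simp
qed

lemma rev_lower: "distinct (leaves t) \<Longrightarrow> all_splits_opt t \<Longrightarrow> rev_tree t \<ge> real (np t) / 35"
proof (induction t)
  case (Leaf x)
  then show ?case by simp
next
  case (Node l r)
  have dl: "distinct (leaves l)" and dr: "distinct (leaves r)"
    using Node.prems by auto
  have o: "opt_2means (lset (Node l r)) (lset l) (lset r)" and ol: "all_splits_opt l" and or: "all_splits_opt r"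
    using Node.prems by auto
  have "rev_split (lset l) (lset r) \<ge> real (card (lset l) * card (lset r)) / 35"
    by (rule split_bound[OF lset_finite o])
  then show ?case using Node.IH(1)[OF dl ol] Node.IH(2)[OF dr or] by (simp add: add_divide_distrib)
qed

theorem mainTheorem1:
  fixes V :: "'a::euclidean_space set" and T :: "'a htree"
  assumes "finite V" and "card V \<ge> 2"
    and "bisecting_kmeans_tree V T"
  shows "\<forall>T'. hc_tree V T' \<longrightarrow> rev_tree T \<ge> (1/35) * rev_tree T'"
proof (intro allI impI)
  fix T' assume h: "hc_tree V T'"
  have hT: "hc_tree V T" and oT: "all_splits_opt T" using assms(3) unfolding bisecting_kmeans_tree_def by auto
  have dT: "distinct (leaves T)" and lT: "lset T = V" using hT unfolding hc_tree_def lset_def by auto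
  have dT': "distinct (leaves T')" and lT': "lset T' = V" using h unfolding hc_tree_def lset_def by auto
  have "2 * np T + card V = card V * card V" using np_formula[OF dT] lT by simp
  moreover have "2 * np T' + card V = card V * card V" using np_formula[OF dT'] lT' by simp
  ultimately have e: "np T = np T'" by simp
  have "(1/35) * rev_tree T' \<le> real (np T') / 35" using rev_upper[of T'] by simp
  also have "\<dots> = real (np T) / 35" using e by simp
  also have "\<dots> \<le> rev_tree T" by (rule rev_lower[OF dT oT])
  finally show "rev_tree T \<ge> (1/35) * rev_tree T'" .
qed

end
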